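(* Let $n\ge 2$. Let $\mathfrak B_1=\{x^{\underline a}\partial_i\mid \underline a\in I^n,\ 1\le i\le n,\ a_i=0,\ a_j\neq p-1\text{ for some }j\neq i\}$, let $V_1=\mathrm{span}_{\mathbb F}\mathfrak B_1$, and let $V_2$ be the span of all $D_{ij}(x^{\underline a})$ with $\underline a\in I^n$, $1\le i<j\le n$, $a_i\neq 0$, $a_j\ne 0$. Then (1) $S(n)=V_1\oplus V_2$; (2) $\mathfrak B_1$ is a basis of $V_1$; (3) $\dim V_1=n(p^{n-1}-1)$ and $\dim V_2=(n-1)(p^n-1)-n(p^{n-1}-1)=np^{n-1}(p-1)-p^n+1$.
   Context: $\mathbb F$ is an algebraically closed field of characteristic $p>2$, $I=\{0,\dots,p-1\}$. $\mathcal A(n)$ is the truncated polynomial algebra with basis $x^{\underline a}=x_1^{a_1}\cdots x_n^{a_n}$, $\underline a\in I^n$, multiplication $x^{\underline a}x^{\underline b}=x^{\underline a+\underline b}$ ($=0$ if $\underline a+\underline b\notin I^n$). $W(n)$ is its derivation algebra, free over $\mathcal A(n)$ on $\partial_1,\dots,\partial_n$, $\partial_i(x_j)=\delta_{ij}$. $D_{ij}(f)=\partial_j(f)\partial_i-\partial_i(f)\partial_j$. $S(n)=[\widetilde S(n),\widetilde S(n)]$ where $\widetilde S(n)=\{\sum f_i\partial_i\in W(n)\mid\sum\partial_i(f_i)=0\}$. *)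

theory Defs
  imports "HOL-Computational_Algebra.Polynomial" "HOL-Library.Function_Algebras"
begin

definition expo :: "nat \<Rightarrow> nat \<Rightarrow> (nat \<Rightarrow> nat) set" where
  "expo p n = {a. (\<forall>k\<in>{1..n}. a k < p) \<and> (\<forall>k. k \<notin> {1..n} \<longrightarrow> a k = 0)}"

text \<open>Elements of A(n): coefficient functions (nat => nat) => 'a, supported on expo p n.
  Elements of W(n): D :: nat => (nat => nat) => 'a, D i is the coefficient of d_i
  (zero for i outside 1..n).\<close>
type_synonym 'a trunc = "(nat \<Rightarrow> nat) \<Rightarrow> 'a"
type_synonym 'a witt = "nat \<Rightarrow> 'a trunc"

definition dA :: "nat \<Rightarrow> nat \<Rightarrow> nat \<Rightarrow> 'a::field trunc \<Rightarrow> 'a trunc" where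
  "dA p n i f = (\<lambda>c. if c \<in> expo p n then of_nat (c i + 1) * f (c(i := c i + 1)) else 0)"

definition mulA :: "nat \<Rightarrow> nat \<Rightarrow> 'a::field trunc \<Rightarrow> 'a trunc \<Rightarrow> 'a trunc" where
  "mulA p n f g = (\<lambda>c. if c \<in> expo p n then
      (\<Sum>a\<in>expo p n. if (\<forall>k. a k \<le> c k) then f a * g (\<lambda>k. c k - a k) else 0) else 0)"

definition monoA :: "(nat \<Rightarrow> nat) \<Rightarrow> 'a::field trunc" where
  "monoA a = (\<lambda>c. if c = a then 1 else 0)"

definition Wn :: "nat \<Rightarrow> nat \<Rightarrow> 'a::field witt set" where
  "Wn p n = {D. \<forall>i a. D i a \<noteq> 0 \<longrightarrow> i \<in> {1..n} \<and> a \<in> expo p n}"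

definition applyW :: "nat \<Rightarrow> nat \<Rightarrow> 'a::field witt \<Rightarrow> 'a trunc \<Rightarrow> 'a trunc" where
  "applyW p n D f = (\<Sum>i\<in>{1..n}. mulA p n (D i) (dA p n i f))"

definition bracketW :: "nat \<Rightarrow> nat \<Rightarrow> 'a::field witt \<Rightarrow> 'a witt \<Rightarrow> 'a witt" where
  "bracketW p n D E = (\<lambda>j. if j \<in> {1..n} then applyW p n D (E j) - applyW p n E (D j) else 0)"

definition scaleW :: "'a::field \<Rightarrow> 'a witt \<Rightarrow> 'a witt" where
  "scaleW c D = (\<lambda>i a. c * D i a)"

definition divW :: "nat \<Rightarrow> nat \<Rightarrow> 'a::field witt \<Rightarrow> 'a trunc" where
  "divW p n D = (\<Sum>i\<in>{1..n}. dA p n i (D i))"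

definition Stilde :: "nat \<Rightarrow> nat \<Rightarrow> 'a::field witt set" where
  "Stilde p n = {D \<in> Wn p n. divW p n D = 0}"

definition Sn :: "nat \<Rightarrow> nat \<Rightarrow> 'a::field witt set" where
  "Sn p n = module.span scaleW {bracketW p n D E | D E. D \<in> Stilde p n \<and> E \<in> Stilde p n}"

definition vecW :: "nat \<Rightarrow> 'a::field trunc \<Rightarrow> 'a witt" where
  "vecW i f = (\<lambda>j. if j = i then f else 0)"

definition Dij :: "nat \<Rightarrow> nat \<Rightarrow> nat \<Rightarrow> nat \<Rightarrow> 'a::field trunc \<Rightarrow> 'a witt" where
  "Dij p n i j f = vecW i (dA p n j f) - vecW j (dA p n i f)"

definition B1 :: "nat \<Rightarrow> nat \<Rightarrow> 'a::field witt set" where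
  "B1 p n = {vecW i (monoA a) | a i. a \<in> expo p n \<and> i \<in> {1..n} \<and> a i = 0 \<and>
              (\<exists>j\<in>{1..n}. j \<noteq> i \<and> a j \<noteq> p - 1)}"

definition V1 :: "nat \<Rightarrow> nat \<Rightarrow> 'a::field witt set" where
  "V1 p n = module.span scaleW (B1 p n)"

definition V2 :: "nat \<Rightarrow> nat \<Rightarrow> 'a::field witt set" where
  "V2 p n = module.span scaleW {Dij p n i j (monoA a) | a i j. a \<in> expo p n \<and>
              1 \<le> i \<and> i < j \<and> j \<le> n \<and> a i \<noteq> 0 \<and> a j \<noteq> 0}"

end

theory Submission
  imports Defs "HOL-Library.FuncSet"
begin

lemma fun_sum_apply: "(\<Sum>x\<in>A. F x) c = (\<Sum>x\<in>A. F x c)"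
  by (induct A rule: infinite_finite_induct) auto

lemma fun_sum_apply2: "(\<Sum>x\<in>A. F x) c d = (\<Sum>x\<in>A. F x c d)"
  by (induct A rule: infinite_finite_induct) auto

lemma card_box:
  assumes "finite K" "\<And>k. k \<in> K \<Longrightarrow> finite (T k)"
  shows "finite {a::nat\<Rightarrow>nat. (\<forall>k\<in>K. a k \<in> T k) \<and> (\<forall>k. k \<notin> K \<longrightarrow> a k = 0)}"
    and "card {a::nat\<Rightarrow>nat. (\<forall>k\<in>K. a k \<in> T k) \<and> (\<forall>k. k \<notin> K \<longrightarrow> a k = 0)} = (\<Prod>k\<in>K. card (T k))"
proof -
  let ?S = "{a::nat\<Rightarrow>nat. (\<forall>k\<in>K. a k \<in> T k) \<and> (\<forall>k. k \<notin> K \<longrightarrow> a k = 0)}"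
  have bij: "bij_betw (\<lambda>a. restrict a K) ?S (PiE K T)"
  proof (rule bij_betwI[where g="\<lambda>f k. if k \<in> K then f k else 0"])
    show "(\<lambda>a. restrict a K) \<in> ?S \<rightarrow> PiE K T" by auto
    show "(\<lambda>f k. if k \<in> K then f k else 0) \<in> PiE K T \<rightarrow> ?S" by auto
    show "(\<lambda>k. if k \<in> K then restrict a K k else 0) = a" if "a \<in> ?S" for a using that by auto
    show "restrict (\<lambda>k. if k \<in> K then f k else 0) K = f" if "f \<in> PiE K T" for f
      using that by (auto simp: PiE_def extensional_def restrict_def)
  qed
  then show "finite ?S" using bij_betw_finite finite_PiE assms by blast
  show "card ?S = (\<Prod>k\<in>K. card (T k))"
    using bij_betw_same_card[OF bij] card_PiE[OF assms(1)] by simp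
qed

lemma expo_box: "expo p n = {a::nat\<Rightarrow>nat. (\<forall>k\<in>{1..n}. a k \<in> {..<p}) \<and> (\<forall>k. k \<notin> {1..n} \<longrightarrow> a k = 0)}"
  unfolding expo_def by auto

lemma finite_expo[simp]: "finite (expo p n)"
  unfolding expo_box by (rule card_box) auto

lemma card_expo: "card (expo p n) = p ^ n"
  unfolding expo_box by (subst card_box) auto

lemma expo_le: assumes "c \<in> expo p n" "\<forall>k. x k \<le> c k" shows "x \<in> expo p n"
proof -
  have "\<forall>k\<in>{1..n}. x k < p" using assms by (auto simp: expo_def intro: le_less_trans)
  moreover have "x k = 0" if "k \<notin> {1..n}" for k
    using assms(2)[rule_format, of k] assms(1) that by (simp add: expo_def)
  ultimately show ?thesis by (simp add: expo_def)
qed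

lemma expo_diff: "c \<in> expo p n \<Longrightarrow> (\<lambda>k. c k - a k) \<in> expo p n"
  by (rule expo_le) auto

definition onM :: "nat \<Rightarrow> nat \<Rightarrow> 'a::field trunc \<Rightarrow> bool" where
  "onM p n f \<longleftrightarrow> (\<forall>c. c \<notin> expo p n \<longrightarrow> f c = 0)"

definition smul :: "'a::field \<Rightarrow> 'a trunc \<Rightarrow> 'a trunc" where
  "smul s f = (\<lambda>c. s * f c)"

lemma smul_apply[simp]: "smul s f c = s * f c" by (simp add: smul_def)

lemma onM_mulA[simp]: "onM p n (mulA p n f g)" by (simp add: onM_def mulA_def)
lemma onM_dA[simp]: "onM p n (dA p n i f)" by (simp add: onM_def dA_def)
lemma onM_monoA[simp]: "a \<in> expo p n \<Longrightarrow> onM p n (monoA a)" by (simp add: onM_def monoA_def)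
lemma onM_zero[simp]: "onM p n 0" by (simp add: onM_def)

lemma mulA_add_left: "mulA p n (f + g) h = mulA p n f h + mulA p n g h"
  by (rule ext) (auto simp: mulA_def algebra_simps sum.distrib[symmetric] intro!: sum.cong cong: if_cong)
lemma mulA_add_right: "mulA p n h (f + g) = mulA p n h f + mulA p n h g"
  by (rule ext) (auto simp: mulA_def algebra_simps sum.distrib[symmetric] intro!: sum.cong cong: if_cong)
lemma mulA_diff_left: "mulA p n (f - g) h = mulA p n f h - mulA p n g h"
  using mulA_add_left[of p n "f - g" g h] by (simp add: eq_diff_eq)
lemma mulA_diff_right: "mulA p n h (f - g) = mulA p n h f - mulA p n h g"
  using mulA_add_right[of p n h "f - g" g] by (simp add: eq_diff_eq)
lemma mulA_smul_left: "mulA p n (smul s f) h = smul s (mulA p n f h)"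
  by (rule ext) (auto simp: mulA_def algebra_simps sum_distrib_left intro!: sum.cong cong: if_cong)
lemma mulA_smul_right: "mulA p n h (smul s f) = smul s (mulA p n h f)"
  by (rule ext) (auto simp: mulA_def algebra_simps sum_distrib_left intro!: sum.cong cong: if_cong)
lemma mulA_zero_left[simp]: "mulA p n 0 h = 0"
  by (rule ext) (auto simp: mulA_def cong: if_cong)
lemma mulA_zero_right[simp]: "mulA p n h 0 = 0"
  by (rule ext) (auto simp: mulA_def cong: if_cong)

lemma mulA_sum_left: "mulA p n (\<Sum>x\<in>A. F x) h = (\<Sum>x\<in>A. mulA p n (F x) h)"
proof (induct A rule: infinite_finite_induct)
  case (insert x B) then show ?case by (simp only: sum.insert[OF insert.hyps(1,2)] mulA_add_left insert.hyps(3))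
next
  case (infinite A) then show ?case by (simp only: sum.infinite[OF infinite] mulA_zero_left)
next
  case empty show ?case by (simp only: sum.empty mulA_zero_left)
qed
lemma mulA_sum_right: "mulA p n h (\<Sum>x\<in>A. F x) = (\<Sum>x\<in>A. mulA p n h (F x))"
proof (induct A rule: infinite_finite_induct)
  case (insert x B) then show ?case by (simp only: sum.insert[OF insert.hyps(1,2)] mulA_add_right insert.hyps(3))
next
  case (infinite A) then show ?case by (simp only: sum.infinite[OF infinite] mulA_zero_right)
next
  case empty show ?case by (simp only: sum.empty mulA_zero_right)
qed

lemma dA_add: "dA p n i (f + g) = dA p n i f + dA p n i g"
  by (rule ext) (auto simp: dA_def algebra_simps)
lemma dA_diff: "dA p n i (f - g) = dA p n i f - dA p n i g"
  by (rule ext) (auto simp: dA_def algebra_simps)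
lemma dA_smul: "dA p n i (smul s f) = smul s (dA p n i f)"
  by (rule ext) (auto simp: dA_def algebra_simps)
lemma dA_zero[simp]: "dA p n i 0 = 0"
  by (rule ext) (auto simp: dA_def)
lemma dA_sum: "dA p n i (\<Sum>x\<in>A. F x) = (\<Sum>x\<in>A. dA p n i (F x))"
proof (induct A rule: infinite_finite_induct)
  case (insert x B) then show ?case by (simp only: sum.insert[OF insert.hyps(1,2)] dA_add insert.hyps(3))
next
  case (infinite A) then show ?case by (simp only: sum.infinite[OF infinite] dA_zero)
next
  case empty show ?case by (simp only: sum.empty dA_zero)
qed

lemma smul_sum: "smul s (\<Sum>x\<in>A. F x) = (\<Sum>x\<in>A. smul s (F x))"
  by (rule ext) (simp add: fun_sum_apply sum_distrib_left)

lemma mono_expand: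
  assumes "onM p n f"
  shows "f = (\<Sum>a\<in>expo p n. smul (f a) (monoA a))"
proof (rule ext)
  fix c
  show "f c = (\<Sum>a\<in>expo p n. smul (f a) (monoA a)) c"
    using assms by (auto simp: fun_sum_apply monoA_def onM_def if_distrib cong: if_cong)
qed

lemma mulA_mono:
  assumes "a \<in> expo p n" "b \<in> expo p n"
  shows "mulA p n (monoA a) (monoA b) = (if a + b \<in> expo p n then monoA (a + b) else 0)"
proof (rule ext)
  fix c
  have "(\<Sum>x\<in>expo p n. if \<forall>k. x k \<le> c k then monoA a x * monoA b (\<lambda>k. c k - x k) else 0)
        = (if (\<forall>k. a k \<le> c k) then monoA b (\<lambda>k. c k - a k) else 0)"
  proof -
    have "(\<Sum>x\<in>expo p n. if \<forall>k. x k \<le> c k then monoA a x * monoA b (\<lambda>k. c k - x k) else 0)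
      = (\<Sum>x\<in>expo p n. if x = a then (if (\<forall>k. a k \<le> c k) then monoA b (\<lambda>k. c k - a k) else 0) else 0)"
      by (rule sum.cong) (auto simp: monoA_def)
    also have "\<dots> = (if (\<forall>k. a k \<le> c k) then monoA b (\<lambda>k. c k - a k) else 0)"
      using assms by (simp add: sum.delta)
    finally show ?thesis .
  qed
  also have "\<dots> = (if c = a + b then 1 else 0)"
  proof -
    have "((\<forall>k. a k \<le> c k) \<and> (\<lambda>k. c k - a k) = b) \<longleftrightarrow> c = a + b"
      apply (auto simp: fun_eq_iff)
      subgoal for x by (metis le_add_diff_inverse)
      done
    then show ?thesis by (auto simp: monoA_def)
  qed
  finally have eq: "(\<Sum>x\<in>expo p n. if \<forall>k. x k \<le> c k then monoA a x * monoA b (\<lambda>k. c k - x k) else 0)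
     = (if c = a + b then 1 else 0)" .
  show "mulA p n (monoA a) (monoA b) c = (if a + b \<in> expo p n then monoA (a + b) else 0) c"
    unfolding mulA_def eq by (auto simp: monoA_def)
qed


lemma smul_smul[simp]: "smul a (smul b f) = smul (a * b) f" by (rule ext) simp
lemma smul_add_right: "smul s (f + g) = smul s f + smul s g" by (rule ext) (simp add: algebra_simps)
lemma smul_add_left: "smul (a + b) f = smul a f + smul b f" by (rule ext) (simp add: algebra_simps)
lemma smul_zero_right[simp]: "smul s 0 = 0" by (rule ext) simp
lemma smul_zero_left[simp]: "smul 0 f = 0" by (rule ext) simp
lemma smul_one[simp]: "smul 1 f = f" by (rule ext) simp

lemma mulA_bisum:
  "mulA p n (\<Sum>a\<in>A. smul (u a) (F a)) (\<Sum>b\<in>B. smul (v b) (G b))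
   = (\<Sum>a\<in>A. \<Sum>b\<in>B. smul (u a * v b) (mulA p n (F a) (G b)))"
  by (simp add: mulA_sum_left mulA_sum_right mulA_smul_left mulA_smul_right smul_sum mult.commute)
     (rule sum.swap)

lemma dA_lsum: "dA p n i (\<Sum>a\<in>A. smul (u a) (F a)) = (\<Sum>a\<in>A. smul (u a) (dA p n i (F a)))"
  by (simp add: dA_sum dA_smul)

definition dec :: "(nat \<Rightarrow> nat) \<Rightarrow> nat \<Rightarrow> nat \<Rightarrow> nat" where
  "dec a i = a(i := a i - 1)"

lemma dec_expo: "a \<in> expo p n \<Longrightarrow> dec a i \<in> expo p n"
  by (rule expo_le[of a]) (auto simp: dec_def)

lemma dA_mono:
  assumes "a \<in> expo p n"
  shows "dA p n i (monoA a) = smul (of_nat (a i)) (monoA (dec a i))"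
proof (rule ext)
  fix c
  show "dA p n i (monoA a) c = smul (of_nat (a i)) (monoA (dec a i)) c"
  proof (cases "a i = 0")
    case True
    then have "c(i := c i + 1) \<noteq> a" by (metis add_is_0 fun_upd_same zero_neq_one)
    then show ?thesis using True by (simp add: dA_def monoA_def)
  next
    case False
    have iff: "c(i := c i + 1) = a \<longleftrightarrow> c = dec a i"
      using False by (auto simp: dec_def fun_eq_iff split: if_splits)
    have "c = dec a i \<Longrightarrow> c \<in> expo p n" using dec_expo[OF assms] by simp
    moreover have "c = dec a i \<Longrightarrow> c i + 1 = a i" using False by (simp add: dec_def)
    ultimately show ?thesis unfolding dA_def monoA_def smul_apply iff
      by (auto simp del: of_nat_Suc simp add: of_nat_Suc[symmetric])
  qed
qed

lemma expo_add_i0: "a \<in> expo p n \<Longrightarrow> i \<notin> {1..n} \<Longrightarrow> a i = 0"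
  by (simp add: expo_def)

lemma leibniz_mono:
  fixes a b :: "nat \<Rightarrow> nat"
  assumes a: "a \<in> expo p n" and b: "b \<in> expo p n" and p0: "of_nat p = (0::'a::field)"
  shows "(dA p n i (mulA p n (monoA a) (monoA b)) :: 'a trunc)
    = mulA p n (dA p n i (monoA a)) (monoA b) + mulA p n (monoA a) (dA p n i (monoA b))"
proof -
  define s where "s = a + b"
  define d where "d = dec s i"
  define X :: "'a trunc" where "X = (if d \<in> expo p n then monoA d else 0)"
  have T1: "mulA p n (dA p n i (monoA a)) (monoA b) = smul (of_nat (a i)) X"
  proof (cases "a i = 0")
    case True then show ?thesis by (simp add: dA_mono[OF a])
  next
    case False
    then have "dec a i + b = d" by (auto simp: d_def s_def dec_def fun_eq_iff)
    then show ?thesis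
      by (simp add: dA_mono[OF a] mulA_smul_left mulA_mono[OF dec_expo[OF a] b] X_def)
  qed
  have T2: "mulA p n (monoA a) (dA p n i (monoA b)) = smul (of_nat (b i)) X"
  proof (cases "b i = 0")
    case True then show ?thesis by (simp add: dA_mono[OF b])
  next
    case False
    then have "a + dec b i = d" by (auto simp: d_def s_def dec_def fun_eq_iff)
    then show ?thesis
      by (simp add: dA_mono[OF b] mulA_smul_right mulA_mono[OF a dec_expo[OF b]] X_def)
  qed
  have L: "dA p n i (mulA p n (monoA a) (monoA b)) = (if s \<in> expo p n then smul (of_nat (s i)) (monoA d) else 0)"
    by (simp add: mulA_mono[OF a b] s_def[symmetric] dA_mono d_def)
  have key: "(if s \<in> expo p n then smul (of_nat (s i)) (monoA d) else 0) = smul (of_nat (s i)) X"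
  proof (cases "s \<in> expo p n")
    case True
    then have "d \<in> expo p n" by (simp add: d_def dec_expo)
    then show ?thesis using True by (simp add: X_def)
  next
    case False
    show ?thesis
    proof (cases "d \<in> expo p n")
      case False2: True
      have si: "s i = p"
      proof -
        have "s i \<noteq> 0"
        proof
          assume "s i = 0" then have "d = s" by (simp add: d_def dec_def fun_eq_iff)
          with False False2 show False by simp
        qed
        then have i: "i \<in> {1..n}" using a b by (auto simp: s_def expo_def)
        have out: "\<forall>k. k \<notin> {1..n} \<longrightarrow> s k = 0" using a b by (simp add: s_def expo_def)
        then obtain k where k: "k \<in> {1..n}" "\<not> s k < p" using False by (auto simp: expo_def)
        have "k = i"
        proof (rule ccontr)
          assume "k \<noteq> i"
          then have "s k = d k" by (simp add: d_def dec_def)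
          moreover have "d k < p" using False2 k(1) by (simp add: expo_def)
          ultimately show False using k(2) by simp
        qed
        then have "s i \<ge> p" using k by simp
        moreover have "s i - 1 < p" using False2 i unfolding d_def dec_def expo_def
          by (metis (mono_tags, lifting) fun_upd_same mem_Collect_eq)
        ultimately show ?thesis by simp
      qed
      show ?thesis using False by (simp add: si p0)
    next
      case False3: False
      then show ?thesis using False by (simp add: X_def)
    qed
  qed
  have sI: "of_nat (s i) = of_nat (a i) + (of_nat (b i)::'a)" by (simp add: s_def)
  have "dA p n i (mulA p n (monoA a) (monoA b)) = smul (of_nat (s i)) X" using L key by (rule trans)
  then show ?thesis unfolding T1 T2 sI smul_add_left .
qed


lemma mulA_mono_comm: "a \<in> expo p n \<Longrightarrow> b \<in> expo p n \<Longrightarrow>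
   mulA p n (monoA a) (monoA b) = mulA p n (monoA b) (monoA a)"
  by (simp add: mulA_mono add.commute)

lemma mulA_mono_assoc:
  assumes "a \<in> expo p n" "b \<in> expo p n" "e \<in> expo p n"
  shows "mulA p n (mulA p n (monoA a) (monoA b)) (monoA e) = mulA p n (monoA a) (mulA p n (monoA b) (monoA e))"
proof (cases "a + b + e \<in> expo p n")
  case True
  have "a + b \<in> expo p n" by (rule expo_le[OF True]) auto
  moreover have "b + e \<in> expo p n" by (rule expo_le[OF True]) auto
  ultimately show ?thesis using assms True by (simp add: mulA_mono add.assoc)
next
  case False
  then show ?thesis using assms by (simp add: mulA_mono add.assoc)
qed

lemma dA_dA_mono:
  assumes "a \<in> expo p n"
  shows "dA p n i (dA p n j (monoA a)) = smul (of_nat (a j) * of_nat (dec a j i)) (monoA (dec (dec a j) i))"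
  by (simp add: dA_mono assms dec_expo dA_smul)

lemma dA_comm_mono:
  assumes "a \<in> expo p n"
  shows "dA p n i (dA p n j (monoA a)) = dA p n j (dA p n i (monoA (a::nat\<Rightarrow>nat)) :: 'a::field trunc)"
proof (cases "i = j")
  case True then show ?thesis by simp
next
  case False
  then have "dec a j i = a i" "dec a i j = a j" "dec (dec a j) i = dec (dec a i) j"
    by (auto simp: dec_def fun_upd_twist)
  then show ?thesis by (simp add: dA_dA_mono assms mult.commute)
qed

context
  fixes p n :: nat
begin

abbreviation "expand (f::'a::field trunc) \<equiv> (\<Sum>a\<in>expo p n. smul (f a) (monoA a))"

lemma leibniz:
  assumes f: "onM p n f" and g: "onM p n g" and p0: "of_nat p = (0::'a::field)"
  shows "dA p n i (mulA p n f g) = mulA p n (dA p n i f) g + mulA p n f (dA p n i (g::'a trunc))"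
proof -
  have "dA p n i (mulA p n (expand f) (expand g))
     = (\<Sum>a\<in>expo p n. \<Sum>b\<in>expo p n. smul (f a * g b) (dA p n i (mulA p n (monoA a) (monoA b))))"
    unfolding mulA_bisum by (simp add: dA_sum dA_smul)
  also have "\<dots> = (\<Sum>a\<in>expo p n. \<Sum>b\<in>expo p n. smul (f a * g b)
      (mulA p n (dA p n i (monoA a)) (monoA b) + mulA p n (monoA a) (dA p n i (monoA b))))"
    by (intro sum.cong refl) (simp add: leibniz_mono p0)
  also have "\<dots> = mulA p n (dA p n i (expand f)) (expand g) + mulA p n (expand f) (dA p n i (expand g))"
    unfolding dA_lsum mulA_bisum by (simp add: smul_add_right sum.distrib)
  finally show ?thesis using mono_expand[OF f] mono_expand[OF g] by simp
qed

lemma mulA_comm: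
  assumes f: "onM p n f" and g: "onM p n g"
  shows "mulA p n f g = mulA p n g (f::'a::field trunc)"
proof -
  have "mulA p n (expand f) (expand g) = mulA p n (expand g) (expand f)"
    unfolding mulA_bisum
    by (subst sum.swap) (intro sum.cong refl, simp add: mulA_mono_comm mult.commute)
  then show ?thesis using mono_expand[OF f] mono_expand[OF g] by simp
qed

lemma mulA_assoc:
  assumes f: "onM p n f" and g: "onM p n g" and h: "onM p n h"
  shows "mulA p n (mulA p n f g) h = mulA p n f (mulA p n g (h::'a::field trunc))"
proof -
  have "mulA p n (mulA p n (expand f) (expand g)) (expand h)
     = (\<Sum>a\<in>expo p n. \<Sum>b\<in>expo p n. \<Sum>e\<in>expo p n. smul (f a * g b * h e)
          (mulA p n (mulA p n (monoA a) (monoA b)) (monoA e)))"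
    unfolding mulA_bisum
    apply (simp only: mulA_sum_left mulA_smul_left)
    apply (simp only: mulA_sum_right mulA_smul_right smul_sum smul_smul)
    done
  also have "\<dots> = (\<Sum>a\<in>expo p n. \<Sum>b\<in>expo p n. \<Sum>e\<in>expo p n. smul (f a * (g b * h e))
          (mulA p n (monoA a) (mulA p n (monoA b) (monoA e))))"
    by (intro sum.cong refl) (simp add: mulA_mono_assoc mult.assoc)
  also have "\<dots> = mulA p n (expand f) (mulA p n (expand g) (expand h))"
    unfolding mulA_bisum
    apply (simp only: mulA_sum_left mulA_smul_left)
    apply (simp only: mulA_sum_right mulA_smul_right smul_sum smul_smul)
    done
  finally show ?thesis using mono_expand[OF f] mono_expand[OF g] mono_expand[OF h] by simp
qed

lemma dA_comm:
  assumes f: "onM p n f"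
  shows "dA p n i (dA p n j f) = dA p n j (dA p n i (f::'a::field trunc))"
proof -
  have "dA p n i (dA p n j (expand f)) = dA p n j (dA p n i (expand f))"
    unfolding dA_lsum by (intro sum.cong refl) (simp add: dA_comm_mono)
  then show ?thesis using mono_expand[OF f] by simp
qed

end

definition tau :: "nat \<Rightarrow> nat \<Rightarrow> nat \<Rightarrow> nat" where
  "tau p n = (\<lambda>k. if k \<in> {1..n} then p - 1 else 0)"

lemma tau_expo: "p \<ge> 1 \<Longrightarrow> tau p n \<in> expo p n"
  by (auto simp: tau_def expo_def)

lemma integral_dA:
  assumes "p \<ge> 1" "j \<in> {1..n}" "of_nat p = (0::'a::field)"
  shows "dA p n j (h::'a trunc) (tau p n) = 0"
proof -
  have "tau p n j + 1 = p" using assms by (simp add: tau_def)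
  then show ?thesis using assms tau_expo[of p n] by (simp add: dA_def)
qed

definition wi :: "nat \<Rightarrow> nat \<Rightarrow> nat \<Rightarrow> nat" where
  "wi p i = (\<lambda>k. if k = i then p - 1 else 0)"

definition topi :: "nat \<Rightarrow> nat \<Rightarrow> nat \<Rightarrow> nat \<Rightarrow> nat" where
  "topi p n i = (tau p n)(i := 0)"

lemma wi_expo: "i \<in> {1..n} \<Longrightarrow> p \<ge> 1 \<Longrightarrow> wi p i \<in> expo p n"
  by (auto simp: wi_def expo_def)

lemma top_extract:
  assumes "p \<ge> 1" "i \<in> {1..n}"
  shows "mulA p n (monoA (wi p i)) f (tau p n) = (f (topi p n i) :: 'a::field)"
proof -
  have "mulA p n (monoA (wi p i)) f (tau p n)
     = (\<Sum>x\<in>expo p n. if x = wi p i then (if \<forall>k. wi p i k \<le> tau p n k then f (\<lambda>k. tau p n k - wi p i k) else 0) else 0)"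
  proof -
    have "mulA p n (monoA (wi p i)) f (tau p n) = (\<Sum>x\<in>expo p n. if \<forall>k. x k \<le> tau p n k then monoA (wi p i) x * f (\<lambda>k. tau p n k - x k) else 0)"
      using tau_expo[OF assms(1)] by (simp add: mulA_def)
    also have "\<dots> = (\<Sum>x\<in>expo p n. if x = wi p i then (if \<forall>k. wi p i k \<le> tau p n k then f (\<lambda>k. tau p n k - wi p i k) else 0) else 0)"
      by (rule sum.cong) (auto simp: monoA_def)
    finally show ?thesis .
  qed
  also have "\<dots> = f (\<lambda>k. tau p n k - wi p i k)"
  proof -
    have le: "\<forall>k. wi p i k \<le> tau p n k" using assms by (auto simp: wi_def tau_def)
    show ?thesis using wi_expo[OF assms(2,1)] le by (simp add: sum.delta)
  qed
  also have "(\<lambda>k. tau p n k - wi p i k) = topi p n i"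
    by (auto simp: tau_def wi_def topi_def)
  finally show ?thesis .
qed


lemma Wn_onM: "D \<in> Wn p n \<Longrightarrow> onM p n (D i)"
  by (auto simp: Wn_def onM_def)

lemma onM_diff: "onM p n f \<Longrightarrow> onM p n g \<Longrightarrow> onM p n (f - g)"
  by (simp add: onM_def)
lemma onM_add: "onM p n f \<Longrightarrow> onM p n g \<Longrightarrow> onM p n (f + g)"
  by (simp add: onM_def)
lemma onM_sum: "(\<And>x. x \<in> A \<Longrightarrow> onM p n (F x)) \<Longrightarrow> onM p n (\<Sum>x\<in>A. F x)"
  by (auto simp: onM_def fun_sum_apply intro!: sum.neutral)
lemma onM_applyW[simp]: "onM p n (applyW p n D f)"
  unfolding applyW_def by (rule onM_sum) simp
lemma onM_divW[simp]: "onM p n (divW p n D)"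
  unfolding divW_def by (rule onM_sum) simp

lemma bracket_Wn: "bracketW p n D E \<in> Wn p n"
proof -
  have z: "applyW p n D' f a = 0" if "a \<notin> expo p n" for D' f a
    using onM_applyW[of p n D' f] that unfolding onM_def by blast
  show ?thesis unfolding Wn_def bracketW_def
    apply (auto simp: z)
    by (metis z)
qed

lemma S_expand:
  assumes D: "D \<in> Wn p n" and E: "E \<in> Wn p n" and p0: "of_nat p = (0::'a::field)"
  shows "(\<Sum>j\<in>{1..n}. dA p n j (applyW p n D ((E::'a witt) j)))
    = (\<Sum>j\<in>{1..n}. \<Sum>i\<in>{1..n}. mulA p n (dA p n j (D i)) (dA p n i (E j)))
      + (\<Sum>i\<in>{1..n}. mulA p n (D i) (dA p n i (divW p n E)))"
proof -
  have "(\<Sum>j\<in>{1..n}. dA p n j (applyW p n D (E j)))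
     = (\<Sum>j\<in>{1..n}. \<Sum>i\<in>{1..n}. mulA p n (dA p n j (D i)) (dA p n i (E j)) + mulA p n (D i) (dA p n j (dA p n i (E j))))"
    unfolding applyW_def dA_sum
    by (intro sum.cong refl) (simp add: leibniz Wn_onM[OF D] p0)
  also have "\<dots> = (\<Sum>j\<in>{1..n}. \<Sum>i\<in>{1..n}. mulA p n (dA p n j (D i)) (dA p n i (E j)))
      + (\<Sum>j\<in>{1..n}. \<Sum>i\<in>{1..n}. mulA p n (D i) (dA p n i (dA p n j (E j))))"
    by (simp add: sum.distrib dA_comm[OF Wn_onM[OF E]])
  also have "(\<Sum>j\<in>{1..n}. \<Sum>i\<in>{1..n}. mulA p n (D i) (dA p n i (dA p n j (E j))))
      = (\<Sum>i\<in>{1..n}. mulA p n (D i) (dA p n i (divW p n E)))"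
    unfolding divW_def dA_sum mulA_sum_right by (rule sum.swap)
  finally show ?thesis .
qed

lemma div_bracket:
  assumes D: "D \<in> Wn p n" and E: "E \<in> Wn p n" and p0: "of_nat p = (0::'a::field)"
  shows "divW p n (bracketW p n D (E::'a witt))
    = (\<Sum>i\<in>{1..n}. mulA p n (D i) (dA p n i (divW p n E))) - (\<Sum>i\<in>{1..n}. mulA p n (E i) (dA p n i (divW p n D)))"
proof -
  have "divW p n (bracketW p n D E) = (\<Sum>j\<in>{1..n}. dA p n j (applyW p n D (E j))) - (\<Sum>j\<in>{1..n}. dA p n j (applyW p n E (D j)))"
    unfolding divW_def bracketW_def sum_subtractf[symmetric]
    by (intro sum.cong refl) (simp add: dA_diff)
  moreover have "(\<Sum>j\<in>{1..n}. \<Sum>i\<in>{1..n}. mulA p n (dA p n j (D i)) (dA p n i (E j)))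
      = (\<Sum>j\<in>{1..n}. \<Sum>i\<in>{1..n}. mulA p n (dA p n j (E i)) (dA p n i (D j)))"
    by (subst sum.swap) (intro sum.cong refl, simp add: mulA_comm)
  ultimately show ?thesis using S_expand[OF D E p0] S_expand[OF E D p0] by simp
qed

lemma div_bracket_zero:
  assumes "D \<in> Stilde p n" "E \<in> Stilde p n" "of_nat p = (0::'a::field)"
  shows "divW p n (bracketW p n D (E::'a witt)) = 0"
  using assms by (simp add: Stilde_def div_bracket)

lemma ibp:
  assumes P: "onM p n P" and g: "onM p n g" and j: "j \<in> {1..n}" and p1: "p \<ge> 1" and p0: "of_nat p = (0::'a::field)"
  shows "mulA p n P (dA p n j g) (tau p n) = - mulA p n (dA p n j P) (g::'a trunc) (tau p n)"
proof -
  have "dA p n j (mulA p n P g) (tau p n) = 0" by (rule integral_dA[OF p1 j p0])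
  then show ?thesis using leibniz[OF P g p0, of j] by (simp add: eq_neg_iff_add_eq_0 add.commute)
qed

lemma ibp_apply:
  assumes D: "D \<in> Stilde p n" and g: "onM p n g" and i: "i \<in> {1..n}" and p1: "p \<ge> 1" and p0: "of_nat p = (0::'a::field)"
  shows "mulA p n (monoA (wi p i)) (applyW p n D g) (tau p n)
     = - mulA p n (mulA p n (dA p n i (monoA (wi p i))) (D i)) (g::'a trunc) (tau p n)"
proof -
  let ?u = "monoA (wi p i) :: 'a trunc"
  have u: "onM p n ?u" using wi_expo[OF i p1] by simp
  have DW: "D \<in> Wn p n" and divD: "divW p n D = 0" using D by (auto simp: Stilde_def)
  have "mulA p n ?u (applyW p n D g) (tau p n) = (\<Sum>j\<in>{1..n}. mulA p n ?u (mulA p n (D j) (dA p n j g)) (tau p n))"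
    by (simp add: applyW_def mulA_sum_right fun_sum_apply)
  also have "\<dots> = (\<Sum>j\<in>{1..n}. mulA p n (mulA p n ?u (D j)) (dA p n j g) (tau p n))"
    by (intro sum.cong refl) (simp add: mulA_assoc[OF u Wn_onM[OF DW]])
  also have "\<dots> = (\<Sum>j\<in>{1..n}. - mulA p n (dA p n j (mulA p n ?u (D j))) g (tau p n))"
    by (intro sum.cong refl) (rule ibp[OF onM_mulA g _ p1 p0], simp)
  also have "\<dots> = - (\<Sum>j\<in>{1..n}. mulA p n (mulA p n (dA p n j ?u) (D j)) g (tau p n))
                 - mulA p n (mulA p n ?u (divW p n D)) g (tau p n)"
    by (simp add: leibniz[OF u Wn_onM[OF DW] p0] mulA_add_left divW_def mulA_sum_right mulA_sum_left
        fun_sum_apply sum.distrib sum_negf sum_subtractf)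
  also have "(\<Sum>j\<in>{1..n}. mulA p n (mulA p n (dA p n j ?u) (D j)) g (tau p n))
      = (\<Sum>j\<in>{1..n}. if j = i then mulA p n (mulA p n (dA p n i ?u) (D i)) g (tau p n) else 0)"
  proof (intro sum.cong refl)
    fix j assume "j \<in> {1..n}"
    show "mulA p n (mulA p n (dA p n j ?u) (D j)) g (tau p n)
        = (if j = i then mulA p n (mulA p n (dA p n i ?u) (D i)) g (tau p n) else 0)"
      using wi_expo[OF i p1] by (auto simp: dA_mono wi_def)
  qed
  also have "mulA p n ?u (divW p n D) = 0" using divD by simp
  finally show ?thesis using i mulA_zero_left[of p n g, unfolded zero_fun_def] by simp
qed

lemma top_bracket:
  assumes D: "D \<in> Stilde p n" and E: "E \<in> Stilde p n" and i: "i \<in> {1..n}"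
    and p1: "p \<ge> 1" and p0: "of_nat p = (0::'a::field)"
  shows "bracketW p n D (E::'a witt) i (topi p n i) = 0"
proof -
  let ?u = "monoA (wi p i) :: 'a trunc"
  let ?v = "dA p n i ?u"
  have DW: "D \<in> Wn p n" and EW: "E \<in> Wn p n" using D E by (auto simp: Stilde_def)
  have Di: "onM p n (D i)" and Ei: "onM p n (E i)" using Wn_onM DW EW by auto
  have v: "onM p n ?v" by simp
  have "bracketW p n D E i (topi p n i) = mulA p n ?u (bracketW p n D E i) (tau p n)"
    by (rule top_extract[OF p1 i, symmetric])
  also have "\<dots> = mulA p n ?u (applyW p n D (E i)) (tau p n) - mulA p n ?u (applyW p n E (D i)) (tau p n)"
    using i by (simp add: bracketW_def mulA_diff_right)
  also have "\<dots> = - mulA p n (mulA p n ?v (D i)) (E i) (tau p n) + mulA p n (mulA p n ?v (E i)) (D i) (tau p n)"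
    by (simp add: ibp_apply[OF D Ei i p1 p0] ibp_apply[OF E Di i p1 p0])
  also have "mulA p n (mulA p n ?v (D i)) (E i) = mulA p n (mulA p n ?v (E i)) (D i)"
    by (simp add: mulA_assoc[OF v Di Ei] mulA_assoc[OF v Ei Di] mulA_comm[OF Di Ei])
  finally show ?thesis by simp
qed


interpretation W: vector_space "scaleW :: 'a::field \<Rightarrow> 'a witt \<Rightarrow> 'a witt"
  by unfold_locales (auto simp: scaleW_def fun_eq_iff algebra_simps)

lemma scaleW_apply[simp]: "scaleW s D i a = s * D i a" by (simp add: scaleW_def)
lemma vecW_apply: "vecW i f j = (if j = i then f else 0)" by (simp add: vecW_def)

lemma divW_add: "divW p n (D + E) = divW p n D + divW p n E"
  by (simp add: divW_def dA_add sum.distrib)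
lemma divW_diff: "divW p n (D - E) = divW p n D - divW p n E"
  by (simp add: divW_def dA_diff sum_subtractf)
lemma divW_scale: "divW p n (scaleW s D) = smul s (divW p n D)"
proof -
  have "scaleW s D i = smul s (D i)" for i by (rule ext) simp
  then show ?thesis by (simp add: divW_def dA_smul smul_sum)
qed
lemma divW_zero[simp]: "divW p n 0 = 0"
  by (simp add: divW_def zero_fun_def[symmetric])

lemma divW_vecW: "i \<in> {1..n} \<Longrightarrow> divW p n (vecW i f) = dA p n i f"
  unfolding divW_def vecW_def
  by (simp add: if_distrib[of "dA p n _"] sum.delta zero_fun_def[symmetric] cong: if_cong)

lemma add_nz: "(a::'a::comm_monoid_add) + b \<noteq> 0 \<Longrightarrow> a \<noteq> 0 \<or> b \<noteq> 0" by auto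

definition Z0 :: "nat \<Rightarrow> nat \<Rightarrow> 'a::field witt set" where
  "Z0 p n = {D \<in> Wn p n. \<forall>i b. D i b \<noteq> 0 \<longrightarrow> b i = 0}"

definition U :: "nat \<Rightarrow> nat \<Rightarrow> 'a::field witt set" where
  "U p n = {D \<in> Wn p n. (\<forall>i b. D i b \<noteq> 0 \<longrightarrow> b i \<noteq> 0) \<and> divW p n D = 0}"

lemma subspace_Z0: "W.subspace (Z0 p n)"
  by (rule W.subspaceI) (auto simp: Z0_def Wn_def dest!: add_nz)

lemma subspace_U: "W.subspace (U p n)"
proof (rule W.subspaceI)
  show "0 \<in> U p n" by (simp add: U_def Wn_def)
  show "x + y \<in> U p n" if "x \<in> U p n" "y \<in> U p n" for x y
    using that by (auto simp: U_def Wn_def divW_add dest!: add_nz)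
  show "scaleW c x \<in> U p n" if "x \<in> U p n" for c x
    using that by (auto simp: U_def Wn_def divW_scale)
qed

lemma Z0_U_inter: "Z0 p n \<inter> U p n = {0}"
proof -
  have "D = 0" if "D \<in> Z0 p n" "D \<in> U p n" for D
  proof (intro ext)
    fix i b
    have h1: "\<forall>i b. D i b \<noteq> 0 \<longrightarrow> b i = 0" and h2: "\<forall>i b. D i b \<noteq> 0 \<longrightarrow> b i \<noteq> 0"
      using that unfolding Z0_def U_def by blast+
    show "D i b = 0 i b" using h1 h2 by auto
  qed
  moreover have "(0::'a::field witt) \<in> Z0 p n \<inter> U p n" by (simp add: Z0_def U_def Wn_def)
  ultimately show ?thesis by blast
qed

lemma B1_Z0: "B1 p n \<subseteq> Z0 p n"
  by (auto simp: B1_def Z0_def Wn_def vecW_def monoA_def split: if_splits)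

lemma V1_Z0: "V1 p n \<subseteq> Z0 p n"
  unfolding V1_def by (rule W.span_minimal[OF B1_Z0 subspace_Z0])

lemma vecW_in_Wn: "i \<in> {1..n} \<Longrightarrow> onM p n f \<Longrightarrow> vecW i f \<in> Wn p n"
  by (auto simp: Wn_def vecW_def onM_def)

lemma Dij_U:
  assumes a: "a \<in> expo p n" and ij: "1 \<le> i" "i < j" "j \<le> n" "a i \<noteq> 0" "a j \<noteq> 0"
  shows "Dij p n i j (monoA a) \<in> (U p n :: 'a::field witt set)"
proof -
  have i: "i \<in> {1..n}" and j: "j \<in> {1..n}" using ij by auto
  have W: "Dij p n i j (monoA a) \<in> (Wn p n :: 'a witt set)"
    unfolding Dij_def Wn_def vecW_def using i j
    by (auto simp: dA_def split: if_splits)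
  have sup: "Dij p n i j (monoA a) k b \<noteq> (0::'a) \<Longrightarrow> b k \<noteq> 0" for k b
    using ij by (auto simp: Dij_def vecW_def dA_mono[OF a] split: if_splits) (auto simp: monoA_def dec_def split: if_splits)
  have "divW p n (Dij p n i j (monoA a)) = (0::'a trunc)"
    unfolding Dij_def divW_diff divW_vecW[OF i] divW_vecW[OF j]
    by (simp add: dA_comm[OF onM_monoA[OF a]])
  then show ?thesis using W sup by (simp add: U_def)
qed

lemma V2_U: "V2 p n \<subseteq> U p n"
  unfolding V2_def by (rule W.span_minimal[OF _ subspace_U]) (auto intro: Dij_U)

lemma V1_V2_inter: "V1 p n \<inter> V2 p n = ({0} :: 'a::field witt set)"
proof -
  have "V1 p n \<inter> V2 p n \<subseteq> ({0} :: 'a witt set)" using V1_Z0 V2_U Z0_U_inter by blast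
  moreover have "(0::'a witt) \<in> V1 p n \<inter> V2 p n" by (simp add: V1_def V2_def W.span_zero)
  ultimately show ?thesis by blast
qed


definition Kset :: "nat \<Rightarrow> nat \<Rightarrow> (nat \<Rightarrow> nat) \<Rightarrow> nat set" where
  "Kset p n c = {j \<in> {1..n}. c j + 1 < p}"
definition kmin :: "nat \<Rightarrow> nat \<Rightarrow> (nat \<Rightarrow> nat) \<Rightarrow> nat" where
  "kmin p n c = Min (Kset p n c)"
definition Idx2 :: "nat \<Rightarrow> nat \<Rightarrow> ((nat \<Rightarrow> nat) \<times> nat) set" where
  "Idx2 p n = {(c, i). c \<in> expo p n \<and> i \<in> {1..n} \<and> c i + 1 < p \<and> kmin p n c < i}"
definition bas :: "nat \<Rightarrow> nat \<Rightarrow> (nat \<Rightarrow> nat) \<times> nat \<Rightarrow> 'a::field witt" where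
  "bas p n x = (case x of (c, i) \<Rightarrow>
     Dij p n (kmin p n c) i (monoA (c(i := c i + 1, kmin p n c := c (kmin p n c) + 1))))"

lemma finite_Kset[simp]: "finite (Kset p n c)" by (simp add: Kset_def)

lemma Idx2_facts:
  assumes "(c, i) \<in> Idx2 p n"
  shows "c \<in> expo p n" "i \<in> {1..n}" "c i + 1 < p" "kmin p n c < i"
    "kmin p n c \<in> {1..n}" "c (kmin p n c) + 1 < p"
proof -
  show c: "c \<in> expo p n" "i \<in> {1..n}" "c i + 1 < p" "kmin p n c < i" using assms by (auto simp: Idx2_def)
  have "i \<in> Kset p n c" using c by (simp add: Kset_def)
  then have "kmin p n c \<in> Kset p n c" unfolding kmin_def by (intro Min_in) auto
  then show "kmin p n c \<in> {1..n}" "c (kmin p n c) + 1 < p" by (auto simp: Kset_def)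
qed

lemma finite_Idx2[simp]: "finite (Idx2 p n)"
proof -
  have "Idx2 p n \<subseteq> expo p n \<times> {1..n}" by (auto simp: Idx2_def)
  then show ?thesis by (rule finite_subset) simp
qed

lemma upd_expo: "c \<in> expo p n \<Longrightarrow> i \<in> {1..n} \<Longrightarrow> c i + 1 < p \<Longrightarrow> c(i := c i + 1) \<in> expo p n"
  by (auto simp: expo_def)

lemma Dij_eval:
  assumes c: "c \<in> expo p n" and ik: "i \<noteq> k" "i \<in> {1..n}" "k \<in> {1..n}" "c i + 1 < p" "c k + 1 < p"
  shows "(Dij p n k i (monoA (c(i := c i + 1, k := c k + 1))) :: 'a::field witt) j b
    = (if j = k \<and> b = c(k := c k + 1) then of_nat (c i + 1) else 0)
      - (if j = i \<and> b = c(i := c i + 1) then of_nat (c k + 1) else 0)"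
proof -
  define a where "a = c(i := c i + 1, k := c k + 1)"
  have eqa: "a = (c(i := c i + 1))(k := (c(i := c i + 1)) k + 1)" using ik by (simp add: a_def)
  have a: "a \<in> expo p n" unfolding eqa
    by (rule upd_expo[OF upd_expo[OF c ik(2) ik(4)]]) (use ik in auto)
  have ai: "a i = c i + 1" "a k = c k + 1" using ik by (auto simp: a_def)
  have d: "dec a i = c(k := c k + 1)" "dec a k = c(i := c i + 1)"
    using ik by (auto simp: a_def dec_def fun_eq_iff)
  show ?thesis
    unfolding a_def[symmetric] Dij_def dA_mono[OF a] ai d
    using ik(1) by (auto simp: vecW_apply monoA_def)
qed

lemma bas_eval:
  assumes x: "(c, i) \<in> Idx2 p n"
  shows "(bas p n (c, i) :: 'a::field witt) j b
    = (if j = kmin p n c \<and> b = c(kmin p n c := c (kmin p n c) + 1) then of_nat (c i + 1) else 0)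
      - (if j = i \<and> b = c(i := c i + 1) then of_nat (c (kmin p n c) + 1) else 0)"
  unfolding bas_def using Idx2_facts[OF x]
  by (simp only: prod.case) (rule Dij_eval, auto)

lemma upd_inj: "c(i := c i + 1) = c'(i := c' i + 1) \<Longrightarrow> c = (c'::nat \<Rightarrow> nat)"
  by (auto simp: fun_eq_iff split: if_splits)

lemma bas_private:
  assumes x: "(c, i) \<in> Idx2 p n" and y: "(c', i') \<in> Idx2 p n"
    and nz: "(bas p n (c', i') :: 'a::field witt) i (c(i := c i + 1)) \<noteq> 0"
  shows "(c', i') = (c, i)"
proof -
  have F: "kmin p n c' < i'" "kmin p n c < i" using Idx2_facts[OF x] Idx2_facts[OF y] by auto
  from nz have "(i = kmin p n c' \<and> c(i := c i + 1) = c'(kmin p n c' := c' (kmin p n c') + 1))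
       \<or> (i = i' \<and> c(i := c i + 1) = c'(i' := c' i' + 1))"
    unfolding bas_eval[OF y] by (auto split: if_splits)
  then show ?thesis
  proof
    assume h: "i = kmin p n c' \<and> c(i := c i + 1) = c'(kmin p n c' := c' (kmin p n c') + 1)"
    then have "c = c'" using upd_inj by metis
    then show ?thesis using h F by simp
  next
    assume h: "i = i' \<and> c(i := c i + 1) = c'(i' := c' i' + 1)"
    then have "c = c'" using upd_inj by metis
    then show ?thesis using h by simp
  qed
qed

lemma bas_own:
  assumes x: "(c, i) \<in> Idx2 p n"
  shows "(bas p n (c, i) :: 'a::field witt) i (c(i := c i + 1)) = - of_nat (c (kmin p n c) + 1)"
  using Idx2_facts[OF x] by (simp add: bas_eval[OF x])

lemma indep_private:
  assumes fin: "finite B"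
    and priv: "\<And>v. v \<in> B \<Longrightarrow> \<exists>j b. v j b \<noteq> 0 \<and> (\<forall>w\<in>B. w \<noteq> v \<longrightarrow> w j b = 0)"
  shows "\<not> W.dependent (B :: 'a::field witt set)"
proof
  assume "W.dependent B"
  then obtain u v where v: "v \<in> B" "u v \<noteq> 0" and s: "(\<Sum>w\<in>B. scaleW (u w) w) = 0"
    using W.dependent_finite[OF fin] by blast
  obtain j b where jb: "v j b \<noteq> 0" "\<forall>w\<in>B. w \<noteq> v \<longrightarrow> w j b = 0" using priv[OF v(1)] by blast
  have "0 = (\<Sum>w\<in>B. scaleW (u w) w) j b" using s by simp
  also have "\<dots> = (\<Sum>w\<in>B. u w * w j b)" by (simp add: fun_sum_apply2)
  also have "\<dots> = (\<Sum>w\<in>B. if w = v then u v * v j b else 0)"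
    by (rule sum.cong) (use jb in auto)
  also have "\<dots> = u v * v j b" using v fin by (simp add: sum.delta)
  finally show False using v jb by simp
qed


lemma bas_V2gen: "x \<in> Idx2 p n \<Longrightarrow> (bas p n x :: 'a::field witt) \<in> {Dij p n i j (monoA a) | a i j. a \<in> expo p n \<and>
              1 \<le> i \<and> i < j \<and> j \<le> n \<and> a i \<noteq> 0 \<and> a j \<noteq> 0}"
proof -
  assume x: "x \<in> Idx2 p n"
  obtain c i where ci: "x = (c, i)" by (cases x)
  note F = Idx2_facts[OF x[unfolded ci]]
  define k where "k = kmin p n c"
  define a where "a = c(i := c i + 1, k := c k + 1)"
  have eqa: "a = (c(i := c i + 1))(k := (c(i := c i + 1)) k + 1)" using F by (simp add: a_def k_def)
  have a: "a \<in> expo p n" unfolding eqa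
    by (rule upd_expo[OF upd_expo[OF F(1,2,3)]]) (use F in \<open>auto simp: k_def\<close>)
  have "bas p n x = Dij p n k i (monoA a)" by (simp add: bas_def ci k_def a_def)
  moreover have "1 \<le> k" "k < i" "i \<le> n" "a k \<noteq> 0" "a i \<noteq> 0" using F by (auto simp: k_def a_def)
  ultimately show ?thesis using a by blast
qed

lemma bas_V2: "bas p n ` Idx2 p n \<subseteq> (V2 p n :: 'a::field witt set)"
  unfolding V2_def using bas_V2gen by (blast intro: W.span_base)


lemma bas_props:
  assumes nz: "\<And>k. 0 < k \<Longrightarrow> k < p \<Longrightarrow> of_nat k \<noteq> (0::'a::field)"
  shows "\<not> W.dependent (bas p n ` Idx2 p n :: 'a witt set)"
    and "inj_on (bas p n :: _ \<Rightarrow> 'a witt) (Idx2 p n)"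
proof -
  have own: "(bas p n (c, i) :: 'a witt) i (c(i := c i + 1)) \<noteq> 0" if "(c, i) \<in> Idx2 p n" for c i
  proof -
    have "(of_nat (c (kmin p n c) + 1)::'a) \<noteq> 0" by (intro nz) (use Idx2_facts[OF that] in auto)
    then show ?thesis unfolding bas_own[OF that] by (simp only: neg_equal_0_iff_equal not_False_eq_True)
  qed
  show "inj_on (bas p n :: _ \<Rightarrow> 'a witt) (Idx2 p n)"
  proof (rule inj_onI)
    fix x y assume x: "x \<in> Idx2 p n" and y: "y \<in> Idx2 p n" and e: "(bas p n x :: 'a witt) = bas p n y"
    obtain c i where ci: "x = (c, i)" by (cases x)
    obtain c' i' where ci': "y = (c', i')" by (cases y)
    have "(bas p n (c', i') :: 'a witt) i (c(i := c i + 1)) \<noteq> 0"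
      using own[of c i] x e by (simp add: ci ci')
    then have "(c', i') = (c, i)" using bas_private[of c i p n c' i'] x y by (simp add: ci ci')
    then show "x = y" by (simp add: ci ci')
  qed
  show "\<not> W.dependent (bas p n ` Idx2 p n :: 'a witt set)"
  proof (rule indep_private)
    show "finite (bas p n ` Idx2 p n :: 'a witt set)" by simp
    fix v assume "v \<in> (bas p n ` Idx2 p n :: 'a witt set)"
    then obtain c i where ci: "(c, i) \<in> Idx2 p n" "v = bas p n (c, i)" by auto
    show "\<exists>j b. v j b \<noteq> 0 \<and> (\<forall>w\<in>bas p n ` Idx2 p n. w \<noteq> v \<longrightarrow> w j b = 0)"
    proof (intro exI conjI ballI impI)
      show "v i (c(i := c i + 1)) \<noteq> 0" using own[OF ci(1)] ci(2) by simp
      fix w assume w: "w \<in> bas p n ` Idx2 p n" "w \<noteq> v"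
      then obtain c' i' where ci': "(c', i') \<in> Idx2 p n" "w = bas p n (c', i')" by auto
      show "w i (c(i := c i + 1)) = 0"
      proof (rule ccontr)
        assume "w i (c(i := c i + 1)) \<noteq> 0"
        then have "(c', i') = (c, i)" using bas_private[OF ci(1) ci'(1)] ci'(2) by simp
        then show False using w ci ci' by simp
      qed
    qed
  qed
qed

lemma aux_div: "(X::'a::field) \<noteq> 0 \<Longrightarrow> (- d / X) * (- X) = d" by simp

lemma dA_at: "c \<in> expo p n \<Longrightarrow> dA p n i f c = of_nat (c i + 1) * f (c(i := c i + 1))"
  by (simp add: dA_def)

lemma U_span:
  assumes p0: "of_nat p = (0::'a::field)"
    and nz: "\<And>k. 0 < k \<Longrightarrow> k < p \<Longrightarrow> of_nat k \<noteq> (0::'a)"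
    and D: "D \<in> (U p n :: 'a witt set)"
  shows "D \<in> W.span (bas p n ` Idx2 p n)"
proof -
  let ?I = "Idx2 p n"
  define lam where "lam x = (case x of (c, i) \<Rightarrow> - D i (c(i := c i + 1)) / of_nat (c (kmin p n c) + 1))" for x
  define S :: "'a witt" where "S = (\<Sum>x\<in>?I. scaleW (lam x) (bas p n x))"
  define R where "R = D - S"
  have S_span: "S \<in> W.span (bas p n ` ?I)"
    unfolding S_def by (intro W.span_sum W.span_scale W.span_base) auto
  have "W.span (bas p n ` ?I) \<subseteq> (V2 p n :: 'a witt set)"
    by (rule W.span_minimal[OF bas_V2]) (simp add: V2_def)
  then have "W.span (bas p n ` ?I) \<subseteq> (U p n :: 'a witt set)"
    using V2_U[of p n] by blast
  then have "S \<in> U p n" using S_span by blast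
  then have RU: "R \<in> U p n" unfolding R_def by (rule W.subspace_diff[OF subspace_U D])
  have Rpriv: "R i (c(i := c i + 1)) = 0" if ci: "(c, i) \<in> ?I" for c i
  proof -
    have "S i (c(i := c i + 1)) = (\<Sum>x\<in>?I. lam x * bas p n x i (c(i := c i + 1)))"
      by (simp add: S_def fun_sum_apply2)
    also have "\<dots> = (\<Sum>x\<in>?I. if x = (c, i) then lam (c, i) * bas p n (c, i) i (c(i := c i + 1)) else 0)"
    proof (rule sum.cong[OF refl])
      fix x assume x: "x \<in> ?I"
      obtain c' i' where x': "x = (c', i')" by (cases x)
      show "lam x * bas p n x i (c(i := c i + 1))
          = (if x = (c, i) then lam (c, i) * bas p n (c, i) i (c(i := c i + 1)) else 0)"
        using bas_private[OF ci, of c' i'] x x' by auto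
    qed
    also have "\<dots> = lam (c, i) * bas p n (c, i) i (c(i := c i + 1))" using ci by (simp add: sum.delta)
    also have "\<dots> = D i (c(i := c i + 1))"
    proof -
      have nz': "(of_nat (c (kmin p n c) + 1)::'a) \<noteq> 0" by (intro nz) (use Idx2_facts[OF ci] in auto)
      show ?thesis unfolding bas_own[OF ci] lam_def prod.case by (rule aux_div[OF nz'])
    qed
    finally show ?thesis by (simp add: R_def)
  qed
  have "R = 0"
  proof (rule ccontr)
    assume "R \<noteq> 0"
    then obtain j b where jb: "R j b \<noteq> 0" by (auto simp: fun_eq_iff)
    have RW: "R \<in> Wn p n" and Rsup: "\<And>i b. R i b \<noteq> 0 \<Longrightarrow> b i \<noteq> 0" and Rdiv: "divW p n R = 0"
      using RU by (auto simp: U_def)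
    have j: "j \<in> {1..n}" and b: "b \<in> expo p n" using jb RW by (auto simp: Wn_def)
    have bj: "b j \<noteq> 0" using Rsup jb by blast
    define c where "c = b(j := b j - 1)"
    have c: "c \<in> expo p n" unfolding c_def by (rule expo_le[OF b]) auto
    have cb: "c(j := c j + 1) = b" using bj by (auto simp: c_def fun_eq_iff)
    have cj: "c j + 1 < p" using bj b j by (auto simp: c_def expo_def)
    have jK: "j \<in> Kset p n c" using j cj by (simp add: Kset_def)
    have kle: "kmin p n c \<le> j" unfolding kmin_def using jK by simp
    have kj: "kmin p n c = j"
    proof (rule ccontr)
      assume "kmin p n c \<noteq> j"
      then have "(c, j) \<in> ?I" using kle c j cj by (simp add: Idx2_def)
      then show False using Rpriv[of c j] jb cb by simp
    qed
    have "divW p n R c = (\<Sum>m\<in>{1..n}. of_nat (c m + 1) * R m (c(m := c m + 1)))"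
      by (simp add: divW_def fun_sum_apply dA_at[OF c])
    also have "\<dots> = (\<Sum>m\<in>{1..n}. if m = j then of_nat (c j + 1) * R j b else 0)"
    proof (rule sum.cong[OF refl])
      fix m assume m: "m \<in> {1..n}"
      show "of_nat (c m + 1) * R m (c(m := c m + 1)) = (if m = j then of_nat (c j + 1) * R j b else 0)"
      proof (cases "m = j")
        case True then show ?thesis using cb by simp
      next
        case False
        show ?thesis
        proof (cases "c m + 1 < p")
          case True
          then have "m \<in> Kset p n c" using m by (simp add: Kset_def)
          then have "kmin p n c \<le> m" unfolding kmin_def by simp
          then have "(c, m) \<in> ?I" using False kj c m True by (simp add: Idx2_def)
          then show ?thesis using Rpriv False by simp
        next
          case False2: False
          have "c m < p" using c m by (simp add: expo_def)
          then have "c m + 1 = p" using False2 by simp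
          then show ?thesis using False p0 by simp
        qed
      qed
    qed
    also have "\<dots> = of_nat (c j + 1) * R j b" using j by (simp add: sum.delta)
    finally have "divW p n R c = of_nat (c j + 1) * R j b" .
    moreover have "of_nat (c j + 1) \<noteq> (0::'a)" by (intro nz) (use cj in auto)
    ultimately show False using Rdiv jb by simp
  qed
  then have "D = S" by (simp add: R_def)
  then show ?thesis using S_span by simp
qed

lemma V2_eq:
  assumes p0: "of_nat p = (0::'a::field)"
    and nz: "\<And>k. 0 < k \<Longrightarrow> k < p \<Longrightarrow> of_nat k \<noteq> (0::'a)"
  shows "(V2 p n :: 'a witt set) = W.span (bas p n ` Idx2 p n)"
proof
  show "W.span (bas p n ` Idx2 p n) \<subseteq> (V2 p n :: 'a witt set)"
    by (rule W.span_minimal[OF bas_V2]) (simp add: V2_def)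
  show "(V2 p n :: 'a witt set) \<subseteq> W.span (bas p n ` Idx2 p n)"
    using V2_U U_span[OF p0 nz] by blast
qed

lemma dim_V2:
  assumes p0: "of_nat p = (0::'a::field)"
    and nz: "\<And>k. 0 < k \<Longrightarrow> k < p \<Longrightarrow> of_nat k \<noteq> (0::'a)"
  shows "W.dim (V2 p n :: 'a witt set) = card (Idx2 p n)"
proof -
  have "W.dim (W.span (bas p n ` Idx2 p n) :: 'a witt set) = card (bas p n ` Idx2 p n :: 'a witt set)"
    by (rule W.dim_span_eq_card_independent[OF bas_props(1)[OF nz]])
  then have "W.dim (V2 p n :: 'a witt set) = card (bas p n ` Idx2 p n :: 'a witt set)"
    using V2_eq[OF p0 nz] by simp
  also have "\<dots> = card (Idx2 p n)" by (rule card_image[OF bas_props(2)[OF nz]])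
  finally show ?thesis .
qed


lemma applyW_vecW: "i \<in> {1..n} \<Longrightarrow> applyW p n (vecW i f) h = mulA p n f (dA p n i h)"
proof -
  assume i: "i \<in> {1..n}"
  have "applyW p n (vecW i f) h = (\<Sum>k\<in>{1..n}. if k = i then mulA p n f (dA p n i h) else 0)"
    unfolding applyW_def by (intro sum.cong refl) (simp add: vecW_apply)
  then show ?thesis using i by (simp add: sum.delta)
qed

lemma applyW_zero[simp]: "applyW p n D 0 = 0"
  by (simp add: applyW_def)

lemma bracket_vecW:
  assumes i: "i \<in> {1..n}" and j: "j \<in> {1..n}"
  shows "bracketW p n (vecW i f) (vecW j g) = vecW j (mulA p n f (dA p n i g)) - vecW i (mulA p n g (dA p n j f))"
proof (rule ext)
  fix m
  show "bracketW p n (vecW i f) (vecW j g) m = (vecW j (mulA p n f (dA p n i g)) - vecW i (mulA p n g (dA p n j f))) m"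
    using i j by (auto simp: bracketW_def vecW_apply applyW_vecW)
qed

lemma scaleW_vecW: "scaleW s (vecW i f) = vecW i (smul s f)"
  by (auto simp: fun_eq_iff vecW_apply)

lemma vecW_Stilde:
  assumes "i \<in> {1..n}" "a \<in> expo p n" "a i = 0"
  shows "vecW i (monoA a) \<in> (Stilde p n :: 'a::field witt set)"
  using assms by (simp add: Stilde_def vecW_in_Wn divW_vecW dA_mono)

lemma zero_expo: "p > 0 \<Longrightarrow> (0::nat\<Rightarrow>nat) \<in> expo p n"
  by (simp add: expo_def)

lemma B1_Sn:
  assumes p1: "p > 1" and nz: "\<And>k. 0 < k \<Longrightarrow> k < p \<Longrightarrow> of_nat k \<noteq> (0::'a::field)"
  shows "B1 p n \<subseteq> (Sn p n :: 'a witt set)"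
proof
  fix v :: "'a witt" assume "v \<in> B1 p n"
  then obtain a i j where v: "v = vecW i (monoA a)" and a: "a \<in> expo p n" and i: "i \<in> {1..n}"
    and ai: "a i = 0" and j: "j \<in> {1..n}" "j \<noteq> i" "a j \<noteq> p - 1"
    unfolding B1_def by blast
  have "a j < p" using a j(1) by (simp add: expo_def)
  then have ajp: "a j + 1 < p" using j(3) by linarith
  define a' where "a' = a(j := a j + 1)"
  have a': "a' \<in> expo p n" unfolding a'_def by (rule upd_expo[OF a j(1) ajp])
  have z: "(0::nat\<Rightarrow>nat) \<in> expo p n" using p1 by (simp add: zero_expo)
  have S1: "vecW j (monoA 0) \<in> (Stilde p n :: 'a witt set)" by (rule vecW_Stilde[OF j(1) z]) simp
  have S2: "vecW i (monoA a') \<in> (Stilde p n :: 'a witt set)"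
    by (rule vecW_Stilde[OF i a']) (use ai j in \<open>simp add: a'_def\<close>)
  have da: "dec a' j = a" by (auto simp: a'_def dec_def fun_eq_iff)
  have "bracketW p n (vecW j (monoA 0)) (vecW i (monoA a'))
      = vecW i (smul (of_nat (a j + 1)) (monoA a) :: 'a trunc)"
    using a a' z by (simp add: bracket_vecW[OF j(1) i] dA_mono mulA_smul_right mulA_mono da a'_def[symmetric])
      (simp add: a'_def vecW_def zero_fun_def[symmetric])
  then have "v = scaleW (1 / of_nat (a j + 1)) (bracketW p n (vecW j (monoA 0)) (vecW i (monoA a')))"
    using nz[of "a j + 1"] ajp by (simp add: scaleW_vecW v)
  moreover have "bracketW p n (vecW j (monoA 0)) (vecW i (monoA a')) \<in> (Sn p n :: 'a witt set)"
    unfolding Sn_def using S1 S2 by (blast intro: W.span_base)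
  ultimately show "v \<in> Sn p n" unfolding Sn_def by (simp add: W.span_scale)
qed

lemma V2gen_Sn:
  assumes p1: "p > 1" and a: "a \<in> expo p n" and ij: "1 \<le> i" "i < j" "j \<le> n"
  shows "Dij p n i j (monoA a) \<in> (Sn p n :: 'a::field witt set)"
proof -
  have i: "i \<in> {1..n}" and j: "j \<in> {1..n}" and ji: "j \<noteq> i" using ij by auto
  define v where "v = (\<lambda>k. if k = i then a i else (0::nat))"
  define u where "u = a(i := 0)"
  have v: "v \<in> expo p n" unfolding v_def by (rule expo_le[OF a]) auto
  have u: "u \<in> expo p n" unfolding u_def by (rule expo_le[OF a]) auto
  have S1: "vecW j (monoA v) \<in> (Stilde p n :: 'a witt set)"
    by (rule vecW_Stilde[OF j v]) (use ji in \<open>simp add: v_def\<close>)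
  have S2: "vecW i (monoA u) \<in> (Stilde p n :: 'a witt set)"
    by (rule vecW_Stilde[OF i u]) (simp add: u_def)
  have e1: "v + dec u j = dec a j" using ji by (auto simp: v_def u_def dec_def fun_eq_iff)
  have e2: "u + dec v i = dec a i" by (auto simp: v_def u_def dec_def fun_eq_iff)
  have uj: "u j = a j" using ji by (simp add: u_def)
  have vi: "v i = a i" by (simp add: v_def)
  have "mulA p n (monoA v) (dA p n j (monoA u)) = (smul (of_nat (a j)) (monoA (dec a j)) :: 'a trunc)"
    using dec_expo[OF a, of j] by (simp add: dA_mono[OF u] mulA_smul_right mulA_mono[OF v dec_expo[OF u]] e1 uj)
  moreover have "mulA p n (monoA u) (dA p n i (monoA v)) = (smul (of_nat (a i)) (monoA (dec a i)) :: 'a trunc)"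
    using dec_expo[OF a, of i] by (simp add: dA_mono[OF v] mulA_smul_right mulA_mono[OF u dec_expo[OF v]] e2 vi)
  ultimately have "bracketW p n (vecW j (monoA v)) (vecW i (monoA u)) = (Dij p n i j (monoA a) :: 'a witt)"
    by (simp add: bracket_vecW[OF j i] Dij_def dA_mono[OF a])
  moreover have "bracketW p n (vecW j (monoA v)) (vecW i (monoA u)) \<in> (Sn p n :: 'a witt set)"
    unfolding Sn_def using S1 S2 by (blast intro: W.span_base)
  ultimately show ?thesis by simp
qed

lemma V1_Sn:
  assumes p1: "p > 1" and nz: "\<And>k. 0 < k \<Longrightarrow> k < p \<Longrightarrow> of_nat k \<noteq> (0::'a::field)"
  shows "V1 p n \<subseteq> (Sn p n :: 'a witt set)"
proof -
  have "B1 p n \<subseteq> (Sn p n :: 'a witt set)" using B1_Sn[OF p1] nz by blast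
  then show ?thesis unfolding V1_def by (rule W.span_minimal) (unfold Sn_def, rule W.subspace_span)
qed

lemma V2_Sn:
  assumes p1: "p > 1"
  shows "V2 p n \<subseteq> (Sn p n :: 'a::field witt set)"
  unfolding V2_def by (rule W.span_minimal) (auto intro: V2gen_Sn[OF p1], unfold Sn_def, rule W.subspace_span)

lemma criterion:
  assumes p1: "p \<ge> 1" and FW: "F \<in> Wn p n" and Fdiv: "divW p n F = 0"
    and Ftop: "\<forall>i\<in>{1..n}. F i (topi p n i) = 0"
  shows "\<exists>u v. F = u + v \<and> u \<in> V1 p n \<and> v \<in> (U p n :: 'a::field witt set)"
proof -
  define F0 :: "'a witt" where "F0 = (\<lambda>i b. if b i = 0 then F i b else 0)"
  define F1 where "F1 = F - F0"
  let ?I = "{1..n} \<times> expo p n"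
  have F0sum: "F0 = (\<Sum>x\<in>?I. scaleW (F0 (fst x) (snd x)) (vecW (fst x) (monoA (snd x))))"
  proof (intro ext)
    fix j b
    have "(\<Sum>x\<in>?I. scaleW (F0 (fst x) (snd x)) (vecW (fst x) (monoA (snd x)))) j b
        = (\<Sum>x\<in>?I. F0 (fst x) (snd x) * vecW (fst x) (monoA (snd x)) j b)"
      by (simp only: fun_sum_apply2 scaleW_apply)
    also have "\<dots> = (\<Sum>x\<in>?I. if x = (j, b) then F0 j b else 0)"
      by (rule sum.cong) (auto simp: vecW_apply monoA_def)
    also have "\<dots> = F0 j b"
      using FW by (auto simp: sum.delta F0_def Wn_def)
    finally show "F0 j b = (\<Sum>x\<in>?I. scaleW (F0 (fst x) (snd x)) (vecW (fst x) (monoA (snd x)))) j b" by simp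
  qed
  have F0V1: "F0 \<in> V1 p n"
    unfolding V1_def
  proof (subst F0sum, intro W.span_sum)
    fix x assume x: "x \<in> ?I"
    obtain i b where ib: "x = (i, b)" by (cases x)
    show "scaleW (F0 (fst x) (snd x)) (vecW (fst x) (monoA (snd x))) \<in> W.span (B1 p n)"
    proof (cases "F0 i b = 0")
      case True then show ?thesis using ib by (simp add: W.span_zero)
    next
      case False
      then have bi: "b i = 0" and Fib: "F i b \<noteq> 0" by (auto simp: F0_def split: if_splits)
      have i: "i \<in> {1..n}" and b: "b \<in> expo p n" using x ib by auto
      have "\<exists>j\<in>{1..n}. j \<noteq> i \<and> b j \<noteq> p - 1"
      proof (rule ccontr)
        assume "\<not> ?thesis"
        then have "b = topi p n i" using b bi by (auto simp: topi_def tau_def fun_eq_iff expo_def)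
        then show False using Ftop i Fib by simp
      qed
      then have "vecW i (monoA b) \<in> B1 p n" using b i bi unfolding B1_def by blast
      then show ?thesis using ib by (auto intro: W.span_scale W.span_base)
    qed
  qed
  have F1eq: "F1 i b = (if b i = 0 then 0 else F i b)" for i b by (simp add: F1_def F0_def)
  have dF0: "divW p n F0 = 0"
  proof -
    have "dA p n i (F0 i) = 0" for i by (rule ext) (simp add: dA_def F0_def)
    then show ?thesis by (simp add: divW_def)
  qed
  have F1U: "F1 \<in> U p n"
    using FW Fdiv dF0 unfolding U_def Wn_def by (auto simp: F1eq divW_diff F1_def[symmetric] split: if_splits)
      (simp add: F1_def divW_diff)
  show ?thesis using F0V1 F1U by (intro exI[of _ F0] exI[of _ F1]) (simp add: F1_def)
qed


lemma Sn_sub: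
  assumes p1: "p > 1" and p0: "of_nat p = (0::'a::field)"
    and nz: "\<And>k. 0 < k \<Longrightarrow> k < p \<Longrightarrow> of_nat k \<noteq> (0::'a)"
  shows "(Sn p n :: 'a witt set) \<subseteq> {u + v | u v. u \<in> V1 p n \<and> v \<in> V2 p n}"
  unfolding Sn_def
proof (rule W.span_minimal)
  show "W.subspace {u + v | u v. u \<in> (V1 p n :: 'a witt set) \<and> v \<in> V2 p n}"
    by (rule W.subspace_sums) (simp_all add: V1_def V2_def)
  show "{bracketW p n D E | D E. D \<in> Stilde p n \<and> E \<in> Stilde p n}
      \<subseteq> {u + v | u v. u \<in> (V1 p n :: 'a witt set) \<and> v \<in> V2 p n}"
  proof
    fix F :: "'a witt" assume "F \<in> {bracketW p n D E | D E. D \<in> Stilde p n \<and> E \<in> Stilde p n}"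
    then obtain D E where F: "F = bracketW p n D E" and D: "D \<in> Stilde p n" and E: "E \<in> Stilde p n" by blast
    have "\<exists>u v. F = u + v \<and> u \<in> V1 p n \<and> v \<in> (U p n :: 'a witt set)"
    proof (rule criterion)
      show "p \<ge> 1" using p1 by simp
      show "F \<in> Wn p n" using F bracket_Wn by simp
      show "divW p n F = 0" using F div_bracket_zero[OF D E p0] by simp
      show "\<forall>i\<in>{1..n}. F i (topi p n i) = 0" using F top_bracket[OF D E _ _ p0] p1 by simp
    qed
    then show "F \<in> {u + v | u v. u \<in> (V1 p n :: 'a witt set) \<and> v \<in> V2 p n}"
      using U_span[OF p0 nz] V2_eq[OF p0 nz] by blast
  qed
qed

lemma Sn_eq:
  assumes p1: "p > 1" and p0: "of_nat p = (0::'a::field)"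
    and nz: "\<And>k. 0 < k \<Longrightarrow> k < p \<Longrightarrow> of_nat k \<noteq> (0::'a)"
  shows "(Sn p n :: 'a witt set) = {u + v | u v. u \<in> V1 p n \<and> v \<in> V2 p n}"
proof
  show "(Sn p n :: 'a witt set) \<subseteq> {u + v | u v. u \<in> V1 p n \<and> v \<in> V2 p n}" by (rule Sn_sub[OF p1 p0 nz])
  show "{u + v | u v. u \<in> V1 p n \<and> v \<in> V2 p n} \<subseteq> (Sn p n :: 'a witt set)"
  proof
    fix x :: "'a witt" assume "x \<in> {u + v | u v. u \<in> V1 p n \<and> v \<in> V2 p n}"
    then obtain u v where x: "x = u + v" and u: "u \<in> V1 p n" and v: "v \<in> V2 p n" by blast
    have "u \<in> Sn p n" using V1_Sn[OF p1] nz u by blast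
    moreover have "v \<in> Sn p n" using V2_Sn[OF p1] v by blast
    ultimately show "x \<in> Sn p n" unfolding x Sn_def by (rule W.span_add)
  qed
qed

definition Idx1 :: "nat \<Rightarrow> nat \<Rightarrow> (nat \<times> (nat \<Rightarrow> nat)) set" where
  "Idx1 p n = {(i, a). i \<in> {1..n} \<and> a \<in> expo p n \<and> a i = 0 \<and> (\<exists>j\<in>{1..n}. j \<noteq> i \<and> a j \<noteq> p - 1)}"

lemma B1_image: "B1 p n = (\<lambda>x. vecW (fst x) (monoA (snd x))) ` Idx1 p n"
  unfolding B1_def Idx1_def by force

lemma vecW_mono_eval: "vecW i (monoA a) j b = (if j = i \<and> b = a then 1 else 0)"
  by (simp add: vecW_apply monoA_def)

lemma B1_inj: "inj_on (\<lambda>x. vecW (fst x) (monoA (snd x)) :: 'a::field witt) (Idx1 p n)"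
proof (rule inj_onI)
  fix x y :: "nat \<times> (nat \<Rightarrow> nat)"
  assume "(vecW (fst x) (monoA (snd x)) :: 'a witt) = vecW (fst y) (monoA (snd y))"
  then have "(vecW (fst x) (monoA (snd x)) :: 'a witt) (fst x) (snd x) = vecW (fst y) (monoA (snd y)) (fst x) (snd x)"
    by simp
  then show "x = y" by (simp add: vecW_mono_eval prod_eq_iff split: if_splits)
qed

lemma finite_Idx1: "finite (Idx1 p n)"
proof -
  have "Idx1 p n \<subseteq> {1..n} \<times> expo p n" by (auto simp: Idx1_def)
  then show ?thesis by (rule finite_subset) simp
qed

lemma B1_indep: "\<not> W.dependent (B1 p n :: 'a::field witt set)"
proof (rule indep_private)
  show "finite (B1 p n :: 'a witt set)" unfolding B1_image using finite_Idx1 by simp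
  fix v :: "'a witt" assume "v \<in> B1 p n"
  then obtain i a where v: "v = vecW i (monoA a)" unfolding B1_def by blast
  show "\<exists>j b. v j b \<noteq> 0 \<and> (\<forall>w\<in>B1 p n. w \<noteq> v \<longrightarrow> w j b = 0)"
  proof (intro exI conjI ballI impI)
    show "v i a \<noteq> 0" by (simp add: v vecW_mono_eval)
    fix w :: "'a witt" assume w: "w \<in> B1 p n" "w \<noteq> v"
    then obtain i' a' where w': "w = vecW i' (monoA a')" unfolding B1_def by blast
    show "w i a = 0" using w w' v by (auto simp: vecW_mono_eval)
  qed
qed

lemma prod_if_one:
  assumes "i \<in> {1..n}"
  shows "(\<Prod>k\<in>{1..n}. if k = i then x else (y::nat)) = x * y ^ (n - 1)"
proof -
  have "(\<Prod>k\<in>{1..n}. if k = i then x else y) = (if i = i then x else y) * (\<Prod>k\<in>{1..n} - {i}. if k = i then x else y)"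
    using assms by (subst prod.remove[of _ i]) auto
  also have "(\<Prod>k\<in>{1..n} - {i}. if k = i then x else y) = (\<Prod>k\<in>{1..n} - {i}. y)"
    by (rule prod.cong) auto
  also have "\<dots> = y ^ (n - 1)" using assms by simp
  finally show ?thesis by simp
qed

lemma card_slice:
  assumes i: "i \<in> {1..n}"
  shows "card {a \<in> expo p n. a i \<in> T} = card (T \<inter> {..<p}) * p ^ (n - 1)"
proof -
  have "{a \<in> expo p n. a i \<in> T}
      = {a::nat\<Rightarrow>nat. (\<forall>k\<in>{1..n}. a k \<in> (if k = i then T \<inter> {..<p} else {..<p})) \<and> (\<forall>k. k \<notin> {1..n} \<longrightarrow> a k = 0)}"
    using i by (auto simp: expo_def)
  also have "card \<dots> = (\<Prod>k\<in>{1..n}. card (if k = i then T \<inter> {..<p} else {..<p}))"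
    by (rule card_box) auto
  also have "\<dots> = (\<Prod>k\<in>{1..n}. if k = i then card (T \<inter> {..<p}) else p)"
    by (rule prod.cong) auto
  finally show ?thesis using prod_if_one[OF i] by simp
qed

lemma card_B1:
  assumes p1: "p \<ge> 1"
  shows "card (B1 p n :: 'a::field witt set) = n * (p ^ (n - 1) - 1)"
proof -
  have "card (B1 p n :: 'a witt set) = card (Idx1 p n)"
    unfolding B1_image by (rule card_image[OF B1_inj])
  also have "Idx1 p n = Sigma {1..n} (\<lambda>i. {a \<in> expo p n. a i \<in> {0}} - {topi p n i})"
  proof -
    have "(\<exists>j\<in>{1..n}. j \<noteq> i \<and> a j \<noteq> p - 1) \<longleftrightarrow> a \<noteq> topi p n i"
      if "i \<in> {1..n}" "a \<in> expo p n" "a i = 0" for i a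
      using that by (auto simp: topi_def tau_def fun_eq_iff expo_def)
    then show ?thesis unfolding Idx1_def by auto
  qed
  also have "card \<dots> = (\<Sum>i\<in>{1..n}. card ({a \<in> expo p n. a i \<in> {0}} - {topi p n i}))"
    by (rule card_SigmaI) auto
  also have "\<dots> = (\<Sum>i\<in>{1..n}. p ^ (n - 1) - 1)"
  proof (rule sum.cong[OF refl])
    fix i assume i: "i \<in> {1..n}"
    have "topi p n i \<in> {a \<in> expo p n. a i \<in> {0}}"
      using i p1 tau_expo[OF p1, of n] by (auto simp: topi_def expo_def tau_def)
    then have "card ({a \<in> expo p n. a i \<in> {0}} - {topi p n i}) = card {a \<in> expo p n. a i \<in> {0}} - 1"
      by (simp add: card_Diff_singleton)
    also have "\<dots> = p ^ (n - 1) - 1" using card_slice[OF i, of p "{0}"] p1 by simp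
    finally show "card ({a \<in> expo p n. a i \<in> {0}} - {topi p n i}) = p ^ (n - 1) - 1" .
  qed
  also have "\<dots> = n * (p ^ (n - 1) - 1)" by simp
  finally show ?thesis .
qed


lemma card_filter_sum: "finite A \<Longrightarrow> card {x \<in> A. P x} = (\<Sum>x\<in>A. if P x then 1 else 0)"
  by (simp add: sum.If_cases Int_def)

lemma Idx2_Sigma: "Idx2 p n = Sigma (expo p n) (\<lambda>c. Kset p n c - {kmin p n c})"
proof -
  have "kmin p n c \<le> i" if "i \<in> Kset p n c" for c i
    unfolding kmin_def using that by simp
  then show ?thesis unfolding Idx2_def by (force simp: Kset_def)
qed

lemma card_Kset_split:
  "card (Kset p n c - {kmin p n c}) + (if Kset p n c \<noteq> {} then 1 else 0) = card (Kset p n c)"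
proof (cases "Kset p n c = {}")
  case True then show ?thesis by simp
next
  case False
  then have "kmin p n c \<in> Kset p n c" unfolding kmin_def by (intro Min_in) auto
  moreover have "card (Kset p n c) \<ge> 1" using False by (simp add: Suc_leI card_gt_0_iff)
  ultimately show ?thesis using False by (simp add: card_Diff_singleton)
qed

lemma Kset_empty_iff: "c \<in> expo p n \<Longrightarrow> p \<ge> 1 \<Longrightarrow> Kset p n c = {} \<longleftrightarrow> c = tau p n"
proof -
  assume c: "c \<in> expo p n" and p1: "p \<ge> 1"
  show ?thesis
  proof
    assume e: "Kset p n c = {}"
    show "c = tau p n"
    proof (rule ext)
      fix k
      show "c k = tau p n k"
      proof (cases "k \<in> {1..n}")
        case True
        then have "\<not> c k + 1 < p" "c k < p" using e c by (auto simp: Kset_def expo_def)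
        then show ?thesis using True by (simp add: tau_def)
      next
        case False
        have "c k = 0" using c False by (simp add: expo_def)
        moreover have "tau p n k = 0" unfolding tau_def by (rule if_not_P[OF False])
        ultimately show ?thesis by simp
      qed
    qed
  next
    assume "c = tau p n"
    then show "Kset p n c = {}" using p1 by (auto simp: Kset_def tau_def)
  qed
qed

lemma card_Idx2:
  assumes p1: "p \<ge> 1"
  shows "card (Idx2 p n) + (p ^ n - 1) = n * ((p - 1) * p ^ (n - 1))"
proof -
  let ?M = "expo p n"
  have "card (Idx2 p n) = (\<Sum>c\<in>?M. card (Kset p n c - {kmin p n c}))"
    unfolding Idx2_Sigma by (rule card_SigmaI) auto
  moreover have "p ^ n - 1 = (\<Sum>c\<in>?M. if Kset p n c \<noteq> {} then 1 else 0)"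
  proof -
    have "{c \<in> ?M. Kset p n c \<noteq> {}} = ?M - {tau p n}" using Kset_empty_iff[OF _ p1] by auto
    then have "card {c \<in> ?M. Kset p n c \<noteq> {}} = p ^ n - 1"
      using tau_expo[OF p1] by (simp add: card_Diff_singleton card_expo)
    then show ?thesis by (simp add: card_filter_sum)
  qed
  ultimately have "card (Idx2 p n) + (p ^ n - 1) = (\<Sum>c\<in>?M. card (Kset p n c))"
    by (simp add: sum.distrib[symmetric] card_Kset_split)
  also have "\<dots> = (\<Sum>c\<in>?M. \<Sum>i\<in>{1..n}. if c i \<in> {..<p - 1} then 1 else 0)"
  proof (rule sum.cong[OF refl])
    fix c
    have eq: "Kset p n c = {i \<in> {1..n}. c i \<in> {..<p - 1}}" using p1 by (auto simp: Kset_def)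
    show "card (Kset p n c) = (\<Sum>i\<in>{1..n}. if c i \<in> {..<p - 1} then 1 else 0)"
      unfolding eq by (rule card_filter_sum) simp
  qed
  also have "\<dots> = (\<Sum>i\<in>{1..n}. card {c \<in> ?M. c i \<in> {..<p - 1}})"
    by (subst sum.swap) (simp add: card_filter_sum)
  also have "\<dots> = (\<Sum>i\<in>{1..n}. (p - 1) * p ^ (n - 1))"
  proof (rule sum.cong[OF refl])
    fix i assume i: "i \<in> {1..n}"
    have "{..<p - 1} \<inter> {..<p} = {..<p - 1}" by auto
    then show "card {c \<in> ?M. c i \<in> {..<p - 1}} = (p - 1) * p ^ (n - 1)"
      using card_slice[OF i, of p "{..<p - 1}"] by simp
  qed
  also have "\<dots> = n * ((p - 1) * p ^ (n - 1))" by simp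
  finally show ?thesis .
qed

theorem lemma4p1:
  fixes p n :: nat
  assumes "prime p" and "p > 2" and "CHAR('a::alg_closed_field) = p" and "n \<ge> 2"
  shows "(Sn p n :: 'a witt set) = {u + v | u v. u \<in> V1 p n \<and> v \<in> V2 p n}
      \<and> (V1 p n :: 'a witt set) \<inter> V2 p n = {0}
      \<and> \<not> module.dependent scaleW (B1 p n :: 'a witt set)
      \<and> vector_space.dim scaleW (V1 p n :: 'a witt set) = n * (p ^ (n - 1) - 1)
      \<and> int (vector_space.dim scaleW (V2 p n :: 'a witt set))
          = (int n - 1) * (int p ^ n - 1) - int n * (int p ^ (n - 1) - 1)
      \<and> (int n - 1) * (int p ^ n - 1) - int n * (int p ^ (n - 1) - 1)
          = int n * int p ^ (n - 1) * (int p - 1) - int p ^ n + 1"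
proof -
  have p1: "p > 1" using assms(2) by simp
  have p0: "of_nat p = (0::'a)" using assms(3) by (simp add: of_nat_eq_0_iff_char_dvd)
  have nz: "of_nat k \<noteq> (0::'a)" if "0 < k" "k < p" for k
    using that assms(3) by (auto simp: of_nat_eq_0_iff_char_dvd dest: dvd_imp_le)
  obtain m where m: "n = Suc m" using assms(4) by (cases n) auto
  have A: "(Sn p n :: 'a witt set) = {u + v | u v. u \<in> V1 p n \<and> v \<in> V2 p n}"
    by (rule Sn_eq[OF p1 p0 nz])
  have B: "(V1 p n :: 'a witt set) \<inter> V2 p n = {0}" by (rule V1_V2_inter)
  have C: "\<not> module.dependent scaleW (B1 p n :: 'a witt set)" by (rule B1_indep)
  have D: "vector_space.dim scaleW (V1 p n :: 'a witt set) = n * (p ^ (n - 1) - 1)"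
    unfolding V1_def using W.dim_span_eq_card_independent[OF C] card_B1[of p n] p1 by simp
  have cI: "card (Idx2 p n) + (p ^ n - 1) = n * ((p - 1) * p ^ (n - 1))"
    using card_Idx2[of p n] p1 by simp
  have pn: "p ^ n \<ge> 1" using p1 by simp
  have cI': "int (card (Idx2 p n)) = int n * ((int p - 1) * int p ^ (n - 1)) - (int p ^ n - 1)"
  proof -
    have "int (card (Idx2 p n)) + int (p ^ n - 1) = int (n * ((p - 1) * p ^ (n - 1)))"
      using cI by (metis of_nat_add)
    then show ?thesis using pn p1 by (simp add: of_nat_diff)
  qed
  have E0: "int (vector_space.dim scaleW (V2 p n :: 'a witt set)) = int (card (Idx2 p n))"
    using dim_V2[OF p0 nz] by simp
  have F: "(int n - 1) * (int p ^ n - 1) - int n * (int p ^ (n - 1) - 1)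
          = int n * int p ^ (n - 1) * (int p - 1) - int p ^ n + 1"
    unfolding m by (simp add: algebra_simps)
  have E: "int (vector_space.dim scaleW (V2 p n :: 'a witt set))
          = (int n - 1) * (int p ^ n - 1) - int n * (int p ^ (n - 1) - 1)"
    unfolding E0 cI' F by (simp add: algebra_simps)
  show ?thesis using A B C D E F by blast
qed


end
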